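(* Let $\mathcal{E}$ be an elliptic curve over $\mathbb{F}_q$ given by a smooth Weierstrass cubic $E(x,y,z)=0$ in $\mathbb{P}^2$, let $n'\ge1$, $l\ge1$, and let $R_1,\dots,R_{3n'+l}$ be distinct points of $\mathcal{E}(\mathbb{F}_q)$ with $(3n'+l)\times D$ evaluation matrix $\mathcal{M}$ and left kernel $\mathcal{K}$. (i) If there is a homogeneous polynomial $F$ of degree $n'$, not divisible by $E$, whose zero set contains $3n'$ of the points $R_1,\dots,R_{3n'+l}$, then $\mathcal{K}$ contains a nonzero vector $v$ having at least $l$ zero entries (namely zero in the positions of the remaining $l$ points). (ii) Conversely, if $\mathcal{K}$ contains a nonzero vector $v$ with at least $l$ zero entries, then for any set $S$ of $3n'$ indices containing all indices $r$ with $v_r\neq0$, there is a homogeneous polynomial of degree $n'$, not divisible by $E$, vanishing at all points $R_r$, $r\in S$.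
   Context: Notation: fix $n'\ge1$, let $D=\binom{n'+2}{2}$, and fix an ordering of the $D$ monomials $x^iy^jz^k$ with $i+j+k=n'$. For a point $R=(x_0:y_0:z_0)\in\mathbb{P}^2(\mathbb{F}_q)$ with a fixed choice of homogeneous coordinates, let $\overline{R}\in\mathbb{F}_q^D$ be the row vector of values $x_0^iy_0^jz_0^k$ in this ordering. The evaluation matrix of points $R_1,\dots,R_N$ is the $N\times D$ matrix $\mathcal{M}$ whose $r$-th row is $\overline{R_r}$; its left kernel is $\mathcal{K}=\{v\in\mathbb{F}_q^N: v\mathcal{M}=0\}$. *)

theory Defs
  imports Main
begin

text \<open>Homogeneous polynomials in x, y, z over a field are represented by their
coefficient functions on exponent triples (i,j,k), meaning the monomial x^i y^j z^k.\<close>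

type_synonym 'a tpoly = "nat \<times> nat \<times> nat \<Rightarrow> 'a"

definition monomials :: "nat \<Rightarrow> (nat \<times> nat \<times> nat) set" where
  "monomials d = {(i,j,k). i + j + k = d}"

definition mono_eval :: "nat \<times> nat \<times> nat \<Rightarrow> 'a \<times> 'a \<times> 'a \<Rightarrow> 'a::comm_ring_1" where
  "mono_eval m p = (case m of (i,j,k) \<Rightarrow> case p of (x,y,z) \<Rightarrow> x^i * y^j * z^k)"

definition poly_finite :: "'a::zero tpoly \<Rightarrow> bool" where
  "poly_finite F \<longleftrightarrow> finite {m. F m \<noteq> 0}"

definition homog :: "nat \<Rightarrow> 'a::zero tpoly \<Rightarrow> bool" where
  "homog d F \<longleftrightarrow> (\<forall>m. F m \<noteq> 0 \<longrightarrow> m \<in> monomials d)"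

definition peval :: "'a::comm_ring_1 tpoly \<Rightarrow> 'a \<times> 'a \<times> 'a \<Rightarrow> 'a" where
  "peval F p = (\<Sum>m\<in>{m. F m \<noteq> 0}. F m * mono_eval m p)"

definition pmult :: "'a::comm_ring_1 tpoly \<Rightarrow> 'a tpoly \<Rightarrow> 'a tpoly" where
  "pmult F G m = (case m of (i,j,k) \<Rightarrow>
     (\<Sum>a\<in>{0..i}. \<Sum>b\<in>{0..j}. \<Sum>c\<in>{0..k}. F (a,b,c) * G (i-a, j-b, k-c)))"

definition pdvd :: "'a::comm_ring_1 tpoly \<Rightarrow> 'a tpoly \<Rightarrow> bool" where
  "pdvd E F \<longleftrightarrow> (\<exists>G. poly_finite G \<and> F = pmult E G)"

definition weier :: "'a \<Rightarrow> 'a \<Rightarrow> 'a \<Rightarrow> 'a \<Rightarrow> 'a \<Rightarrow> 'a::comm_ring_1 tpoly" where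
  "weier a1 a2 a3 a4 a6 m =
     (if m = (0,2,1) then 1
      else if m = (1,1,1) then a1
      else if m = (0,1,2) then a3
      else if m = (3,0,0) then -1
      else if m = (2,0,1) then -a2
      else if m = (1,0,2) then -a4
      else if m = (0,0,3) then -a6
      else 0)"

text \<open>Discriminant of the Weierstrass equation; the cubic is smooth iff it is nonzero.\<close>
definition weier_disc :: "'a \<Rightarrow> 'a \<Rightarrow> 'a \<Rightarrow> 'a \<Rightarrow> 'a \<Rightarrow> 'a::comm_ring_1" where
  "weier_disc a1 a2 a3 a4 a6 =
    (let b2 = a1^2 + 4*a2; b4 = 2*a4 + a1*a3; b6 = a3^2 + 4*a6;
         b8 = a1^2*a6 + 4*a2*a6 - a1*a3*a4 + a2*a3^2 - a4^2
     in - (b2^2*b8) - 8*b4^3 - 27*b6^2 + 9*b2*b4*b6)"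

definition proj_point :: "'a::zero \<times> 'a \<times> 'a \<Rightarrow> bool" where
  "proj_point p \<longleftrightarrow> p \<noteq> (0,0,0)"

definition proj_eq :: "'a::field \<times> 'a \<times> 'a \<Rightarrow> 'a \<times> 'a \<times> 'a \<Rightarrow> bool" where
  "proj_eq p q \<longleftrightarrow> (\<exists>c. c \<noteq> 0 \<and> q = (case p of (x,y,z) \<Rightarrow> (c*x, c*y, c*z)))"

text \<open>Left kernel of the N x D evaluation matrix of degree d monomials at R 0, ..., R (N-1):
  v M = 0, i.e. for every monomial column the weighted sum of its entries vanishes.\<close>
definition in_left_kernel :: "nat \<Rightarrow> nat \<Rightarrow> (nat \<Rightarrow> 'a \<times> 'a \<times> 'a) \<Rightarrow> (nat \<Rightarrow> 'a::comm_ring_1) \<Rightarrow> bool" where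
  "in_left_kernel d N R v \<longleftrightarrow> (\<forall>m\<in>monomials d. (\<Sum>r<N. v r * mono_eval m (R r)) = 0)"

end

theory Submission
  imports Defs "HOL-Library.Cardinality"
begin


definition suppon :: "'b set \<Rightarrow> ('b \<Rightarrow> 'a::zero) set" where
  "suppon A = {f. \<forall>x. x \<notin> A \<longrightarrow> f x = 0}"

lemma finite_suppon:
  assumes "finite A" shows "finite (suppon A :: ('b \<Rightarrow> 'a::{zero,finite}) set)"
  using assms
proof (induction A rule: finite_induct)
  case empty
  have "suppon {} = {(\<lambda>_. 0) :: 'b \<Rightarrow> 'a}" by (auto simp: suppon_def)
  then show ?case by simp
next
  case (insert a A)
  have "suppon (insert a A) \<subseteq> (\<lambda>(t,f). f(a:=t)) ` (UNIV \<times> (suppon A :: ('b \<Rightarrow> 'a) set))"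
  proof
    fix f :: "'b \<Rightarrow> 'a" assume f: "f \<in> suppon (insert a A)"
    have "f = (f(a:=0))(a := f a)" by simp
    moreover have "f(a:=0) \<in> suppon A" using f by (auto simp: suppon_def)
    ultimately show "f \<in> (\<lambda>(t,f). f(a:=t)) ` (UNIV \<times> suppon A)" by (metis (no_types, lifting) UNIV_I case_prod_conv image_eqI mem_Sigma_iff)
  qed
  then show ?case using insert by (meson finite_SigmaI finite_imageI finite_subset finite)
qed

lemma card_suppon:
  assumes "finite A" shows "card (suppon A :: ('b \<Rightarrow> 'a::{zero,finite}) set) = CARD('a) ^ card A"
  using assms
proof (induction A rule: finite_induct)
  case empty
  have "suppon {} = {(\<lambda>_. 0) :: 'b \<Rightarrow> 'a}" by (auto simp: suppon_def)
  then show ?case by simp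
next
  case (insert a A)
  have eq: "suppon (insert a A) = (\<lambda>(t,f). f(a:=t)) ` (UNIV \<times> (suppon A :: ('b \<Rightarrow> 'a) set))"
  proof
    show "suppon (insert a A) \<subseteq> (\<lambda>(t,f). f(a:=t)) ` (UNIV \<times> (suppon A :: ('b \<Rightarrow> 'a) set))"
    proof
      fix f :: "'b \<Rightarrow> 'a" assume f: "f \<in> suppon (insert a A)"
      have "f = (f(a:=0))(a := f a)" by simp
      moreover have "f(a:=0) \<in> suppon A" using f by (auto simp: suppon_def)
      ultimately show "f \<in> (\<lambda>(t,f). f(a:=t)) ` (UNIV \<times> suppon A)" by (metis (no_types, lifting) UNIV_I case_prod_conv image_eqI mem_Sigma_iff)
    qed
    show "(\<lambda>(t,f). f(a:=t)) ` (UNIV \<times> (suppon A :: ('b \<Rightarrow> 'a) set)) \<subseteq> suppon (insert a A)"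
      by (auto simp: suppon_def)
  qed
  have inj: "inj_on (\<lambda>(t,f). f(a:=t)) (UNIV \<times> (suppon A :: ('b \<Rightarrow> 'a) set))"
  proof (rule inj_onI, clarify)
    fix t f t' f' assume f: "(f::'b\<Rightarrow>'a) \<in> suppon A" and f': "f' \<in> suppon A" and e: "f(a := t) = f'(a := t')"
    have "t = t'" using fun_cong[OF e, of a] by simp
    moreover have "f = f'"
    proof
      fix x show "f x = f' x"
        using fun_cong[OF e, of x] f f' insert(2) by (cases "x = a") (auto simp: suppon_def)
    qed
    ultimately show "t = t' \<and> f = f'" by simp
  qed
  have "card (suppon (insert a A) :: ('b \<Rightarrow> 'a) set) = card ((UNIV::'a set) \<times> (suppon A :: ('b \<Rightarrow> 'a) set))"
    unfolding eq using card_image[OF inj] by simp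
  also have "\<dots> = CARD('a) * CARD('a) ^ card A" using insert by (simp add: card_cartesian_product)
  finally show ?case using insert by simp
qed

lemma sum_upd:
  fixes u w :: "'b \<Rightarrow> 'a::comm_ring_1"
  assumes "finite S" "r0 \<in> S"
  shows "(\<Sum>r\<in>S. (u(r0 := x)) r * w r) = (\<Sum>r\<in>S. u r * w r) + (x - u r0) * w r0"
proof -
  have "(\<Sum>r\<in>S. (u(r0 := x)) r * w r) = x * w r0 + (\<Sum>r\<in>S-{r0}. u r * w r)"
    using assms by (subst sum.remove[of S r0]) (auto intro!: sum.cong)
  moreover have "(\<Sum>r\<in>S. u r * w r) = u r0 * w r0 + (\<Sum>r\<in>S-{r0}. u r * w r)"
    using assms by (simp add: sum.remove[of S r0])
  ultimately show ?thesis by (simp add: algebra_simps)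
qed

lemma card_hyper:
  fixes w :: "'b \<Rightarrow> 'a::{field,finite}"
  assumes S: "finite S" and r0: "r0 \<in> S" and w0: "w r0 \<noteq> 0"
  shows "card {v \<in> suppon S. (\<Sum>r\<in>S. v r * w r) = 0} * CARD('a) = CARD('a) ^ card S"
proof -
  let ?Z = "{v \<in> suppon S. (\<Sum>r\<in>S. v r * w r) = 0}"
  let ?h = "\<lambda>(v::'b\<Rightarrow>'a, t::'a). v(r0 := v r0 + t / w r0)"
  have fv: "(\<Sum>r\<in>S. (?h (v,t)) r * w r) = t" if "v \<in> ?Z" for v t
    using that sum_upd[OF S r0, of v "v r0 + t / w r0" w] w0 by simp
  have inj: "inj_on ?h (?Z \<times> UNIV)"
  proof (rule inj_onI, clarify)
    fix v t v' t' assume v: "v \<in> suppon S" "(\<Sum>r\<in>S. v r * w r) = 0" and v': "v' \<in> suppon S" "(\<Sum>r\<in>S. v' r * w r) = 0"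
      and e: "v(r0 := v r0 + t / w r0) = v'(r0 := v' r0 + t' / w r0)"
    have "t = t'" using fv[of v t] fv[of v' t'] v v' e by simp
    moreover have "v = v'"
    proof
      fix x show "v x = v' x" using fun_cong[OF e, of x] \<open>t = t'\<close> by (cases "x = r0") auto
    qed
    ultimately show "v = v' \<and> t = t'" by simp
  qed
  have img: "?h ` (?Z \<times> UNIV) = suppon S"
  proof
    show "?h ` (?Z \<times> UNIV) \<subseteq> suppon S" using r0 by (auto simp: suppon_def)
    show "suppon S \<subseteq> ?h ` (?Z \<times> UNIV)"
    proof
      fix u :: "'b \<Rightarrow> 'a" assume u: "u \<in> suppon S"
      define t where "t = (\<Sum>r\<in>S. u r * w r)"
      define v where "v = u(r0 := u r0 - t / w r0)"
      have "v \<in> ?Z"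
        using u r0 sum_upd[OF S r0, of u "u r0 - t / w r0" w] w0 unfolding v_def t_def
        by (auto simp: suppon_def)
      moreover have "?h (v,t) = u" unfolding v_def by auto
      ultimately show "u \<in> ?h ` (?Z \<times> UNIV)" by force
    qed
  qed
  have "card (suppon S :: ('b\<Rightarrow>'a) set) = card (?Z \<times> (UNIV::'a set))"
    using card_image[OF inj] img by simp
  also have "\<dots> = card ?Z * CARD('a)" by (simp add: card_cartesian_product)
  finally show ?thesis using card_suppon[OF S, where 'a='a] by simp
qed

lemma card_field_ge2: "2 \<le> CARD('a::{field,finite})"
proof -
  have "{0::'a, 1} \<subseteq> UNIV" by simp
  hence "card {0::'a, 1} \<le> CARD('a)" by (rule card_mono[OF finite])
  thus ?thesis by simp
qed

lemma count_side:
  fixes a :: "'i \<Rightarrow> 'j \<Rightarrow> 'a::{field,finite}"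
  assumes S: "finite S" and M: "finite M"
  defines "K \<equiv> {c \<in> suppon M. \<forall>r\<in>S. (\<Sum>m\<in>M. a r m * c m) = 0}"
  defines "P \<equiv> {(v,c). v \<in> suppon S \<and> c \<in> suppon M \<and> (\<Sum>r\<in>S. v r * (\<Sum>m\<in>M. a r m * c m)) = 0}"
  shows "CARD('a) * card P + card K * CARD('a)^card S = card K * (CARD('a) * CARD('a)^card S) + CARD('a)^card M * CARD('a)^card S"
proof -
  let ?q = "CARD('a)"
  define Z where "Z c = {v \<in> suppon S. (\<Sum>r\<in>S. v r * (\<Sum>m\<in>M. a r m * c m)) = 0}" for c :: "'j \<Rightarrow> 'a"
  have Peq: "P = (\<lambda>(c,v). (v,c)) ` (SIGMA c:suppon M. Z c)"
    unfolding P_def Z_def by force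
  have finZ: "finite (Z c)" for c using finite_suppon[OF S, where 'a='a] unfolding Z_def by simp
  have "card P = card (SIGMA c:suppon M. Z c)"
    unfolding Peq by (rule card_image) (auto simp: inj_on_def)
  also have "\<dots> = (\<Sum>c\<in>suppon M. card (Z c))" using finite_suppon[OF M, where 'a='a] finZ by simp
  finally have cP: "?q * card P = (\<Sum>c\<in>suppon M. ?q * card (Z c))" by (simp add: sum_distrib_left)
  have each: "?q * card (Z c) = (if c \<in> K then ?q * ?q ^ card S else ?q ^ card S)" if c: "c \<in> suppon M" for c
  proof (cases "c \<in> K")
    case True
    hence "Z c = suppon S" unfolding Z_def K_def by (auto simp: suppon_def)
    then show ?thesis using True card_suppon[OF S, where 'a='a] by simp
  next
    case False
    then obtain r0 where r0: "r0 \<in> S" "(\<Sum>m\<in>M. a r0 m * c m) \<noteq> 0" using c unfolding K_def by auto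
    have "card (Z c) * ?q = ?q ^ card S" unfolding Z_def
      by (rule card_hyper[OF S r0(1)]) (use r0 in simp)
    then show ?thesis using False by (simp add: mult.commute)
  qed
  have "?q * card P = (\<Sum>c\<in>suppon M. if c \<in> K then ?q * ?q ^ card S else ?q ^ card S)"
    unfolding cP by (rule sum.cong) (auto simp: each)
  also have "\<dots> = card K * (?q * ?q ^ card S) + card (suppon M - K) * ?q ^ card S"
  proof -
    have a: "suppon M \<inter> K = K" unfolding K_def by auto
    show ?thesis
      using sum.If_cases[OF finite_suppon[OF M, where 'a='a], of "\<lambda>c. c\<in>K" "\<lambda>_. ?q * ?q ^ card S" "\<lambda>_. ?q ^ card S"] a
      by (simp only: Collect_mem_eq sum_constant Diff_eq of_nat_id)
  qed
  finally have 1: "?q * card P = card K * (?q * ?q ^ card S) + card (suppon M - K) * ?q ^ card S" .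
  have Ksub: "K \<subseteq> suppon M" unfolding K_def by auto
  have fin: "finite (suppon M :: ('j \<Rightarrow> 'a) set)" by (rule finite_suppon[OF M])
  have "card (suppon M - K) + card K = card (suppon M :: ('j \<Rightarrow> 'a) set)"
    using card_Diff_subset[OF finite_subset[OF Ksub fin] Ksub] card_mono[OF fin Ksub] by simp
  also have "\<dots> = ?q ^ card M" by (rule card_suppon[OF M])
  finally have D: "card (suppon M - K) + card K = ?q ^ card M" .
  have "?q*card P + card K * ?q^card S = card K * (?q * ?q^card S) + (card (suppon M - K) + card K) * ?q ^ card S"
    using 1 by (simp only: add_mult_distrib add.assoc)
  then show ?thesis unfolding D .
qed

lemma arith_aux:
  fixes q P X Y T :: nat
  assumes a1: "q*P + K*Z = K*(q*Z) + T" and a2: "q*P' + K'*Z' = K'*(q*Z') + T'" and "2 \<le> q" "P = P'" "T = T'"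
  shows "K*Z = K'*Z'"
proof -
  define X where "X = K*Z"
  define Y where "Y = K'*Z'"
  have b1: "q*P + X = q*X + T" using a1 unfolding X_def by (simp add: ac_simps)
  have b2: "q*P + Y = q*Y + T" using a2 assms(4,5) unfolding Y_def by (simp add: ac_simps)
  have "X + q*Y = q*X + Y" using b1 b2 by linarith
  hence "int X + int q * int Y = int q * int X + int Y" by (metis of_nat_add of_nat_mult)
  moreover have "(int q - 1) * (int X - int Y) = int q * int X - int q * int Y - int X + int Y"
    by (simp add: algebra_simps)
  ultimately have "(int q - 1) * (int X - int Y) = 0" by linarith
  moreover have "int q - 1 \<noteq> 0" using assms(3) by simp
  ultimately have "int X = int Y" by simp
  then show ?thesis unfolding X_def Y_def by (simp only: of_nat_eq_iff)
qed

lemma double_count: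
  fixes a :: "'i \<Rightarrow> 'j \<Rightarrow> 'a::{field,finite}"
  assumes S: "finite S" and M: "finite M"
  shows "card {c \<in> suppon M. \<forall>r\<in>S. (\<Sum>m\<in>M. a r m * c m) = 0} * CARD('a)^card S
       = card {v \<in> suppon S. \<forall>m\<in>M. (\<Sum>r\<in>S. a r m * v r) = 0} * CARD('a)^card M"
proof -
  let ?q = "CARD('a)"
  let ?K1 = "{c \<in> suppon M. \<forall>r\<in>S. (\<Sum>m\<in>M. a r m * c m) = 0}"
  let ?K2 = "{v \<in> suppon S. \<forall>m\<in>M. (\<Sum>r\<in>S. a r m * v r) = 0}"
  let ?P1 = "{(v,c). v \<in> suppon S \<and> c \<in> suppon M \<and> (\<Sum>r\<in>S. v r * (\<Sum>m\<in>M. a r m * c m)) = 0}"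
  let ?P2 = "{(c,v). c \<in> suppon M \<and> v \<in> suppon S \<and> (\<Sum>m\<in>M. c m * (\<Sum>r\<in>S. a r m * v r)) = 0}"
  have e1: "?q * card ?P1 + card ?K1 * ?q^card S = card ?K1 * (?q * ?q^card S) + ?q^card M * ?q^card S"
    by (rule count_side[OF S M])
  have e2: "?q * card ?P2 + card ?K2 * ?q^card M = card ?K2 * (?q * ?q^card M) + ?q^card S * ?q^card M"
    by (rule count_side[OF M S, of "\<lambda>m r. a r m"])
  have bil: "(\<Sum>r\<in>S. v r * (\<Sum>m\<in>M. a r m * c m)) = (\<Sum>m\<in>M. c m * (\<Sum>r\<in>S. a r m * v r))" for v c
    unfolding sum_distrib_left by (subst sum.swap) (simp add: ac_simps)
  have "?P2 = (\<lambda>(v,c). (c,v)) ` ?P1" using bil by force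
  hence "card ?P2 = card ?P1" by (simp add: card_image inj_on_def)
  then show ?thesis using arith_aux[OF e1 e2 card_field_ge2[where 'a='a]] by (simp add: ac_simps)
qed



definition tadd :: "nat \<times> nat \<times> nat \<Rightarrow> nat \<times> nat \<times> nat \<Rightarrow> nat \<times> nat \<times> nat" where
  "tadd e g = (fst e + fst g, fst (snd e) + fst (snd g), snd (snd e) + snd (snd g))"

definition tdeg :: "nat \<times> nat \<times> nat \<Rightarrow> nat" where
  "tdeg m = fst m + fst (snd m) + snd (snd m)"

lemma tdeg_tadd: "tdeg (tadd e g) = tdeg e + tdeg g"
  by (simp add: tdeg_def tadd_def)

lemma monomials_tdeg: "m \<in> monomials d \<longleftrightarrow> tdeg m = d"
  by (cases m) (auto simp: monomials_def tdeg_def)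

lemma mono_eval_tadd: "mono_eval (tadd e g) p = mono_eval e p * mono_eval g p"
  by (cases e; cases g; cases p) (simp add: mono_eval_def tadd_def power_add ac_simps)

lemma pmult_pairs:
  "pmult F G m = (\<Sum>p\<in>{p. tadd (fst p) (snd p) = m}. F (fst p) * G (snd p))"
proof -
  obtain i j k where m: "m = (i,j,k)" by (cases m)
  let ?B = "{0..i} \<times> {0..j} \<times> {0..k}"
  let ?s = "\<lambda>e::nat\<times>nat\<times>nat. (i - fst e, j - fst (snd e), k - snd (snd e))"
  let ?h = "\<lambda>e. (e, ?s e)"
  have "pmult F G m = (\<Sum>a\<in>{0..i}. \<Sum>b\<in>{0..j}. \<Sum>c\<in>{0..k}. F (a,b,c) * G (i-a, j-b, k-c))"
    by (simp add: pmult_def m)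
  also have "\<dots> = (\<Sum>e\<in>?B. F e * G (?s e))"
    by (simp add: sum.cartesian_product) (rule sum.cong, auto)
  also have "\<dots> = (\<Sum>p\<in>{p. tadd (fst p) (snd p) = m}. F (fst p) * G (snd p))"
  proof -
    have bij: "bij_betw ?h ?B {p. tadd (fst p) (snd p) = m}"
    proof (rule bij_betw_imageI)
      show "inj_on ?h ?B" by (auto simp: inj_on_def)
      show "?h ` ?B = {p. tadd (fst p) (snd p) = m}"
      proof
        show "?h ` ?B \<subseteq> {p. tadd (fst p) (snd p) = m}" by (auto simp: tadd_def m)
        show "{p. tadd (fst p) (snd p) = m} \<subseteq> ?h ` ?B"
        proof
          fix p assume "p \<in> {p. tadd (fst p) (snd p) = m}"
          hence t: "tadd (fst p) (snd p) = m" by simp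
          obtain a b c a' b' c' where p: "p = ((a,b,c),(a',b',c'))" by (cases p) auto
          have "i = a + a'" "j = b + b'" "k = c + c'" using t by (auto simp: p m tadd_def)
          hence "p = ?h (a,b,c)" "(a,b,c) \<in> ?B" by (auto simp: p)
          thus "p \<in> ?h ` ?B" by blast
        qed
      qed
    qed
    show ?thesis using sum.reindex_bij_betw[OF bij, of "\<lambda>p. F (fst p) * G (snd p)"] by simp
  qed
  finally show ?thesis .
qed

lemma finite_pairs: "finite {p. tadd (fst p) (snd p) = m}"
proof -
  let ?X = "{..fst m} \<times> {..fst (snd m)} \<times> {..snd (snd m)}"
  have "{p. tadd (fst p) (snd p) = m} \<subseteq> ?X \<times> ?X" by (auto simp: tadd_def)
  thus ?thesis by (rule finite_subset) simp
qed

lemma pmult_supp: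
  assumes A: "finite A" and B: "finite B" and FA: "\<And>x. F x \<noteq> 0 \<Longrightarrow> x \<in> A" and GB: "\<And>x. G x \<noteq> 0 \<Longrightarrow> x \<in> B"
  shows "pmult F G m = (\<Sum>p\<in>{p\<in>A\<times>B. tadd (fst p) (snd p) = m}. F (fst p) * G (snd p))"
  unfolding pmult_pairs
proof (rule sum.mono_neutral_right[OF finite_pairs])
  show "{p \<in> A \<times> B. tadd (fst p) (snd p) = m} \<subseteq> {p. tadd (fst p) (snd p) = m}" by auto
  show "\<forall>i\<in>{p. tadd (fst p) (snd p) = m} - {p \<in> A \<times> B. tadd (fst p) (snd p) = m}. F (fst i) * G (snd i) = 0"
  proof (rule ballI)
    fix q assume "q \<in> {p. tadd (fst p) (snd p) = m} - {p \<in> A \<times> B. tadd (fst p) (snd p) = m}"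
    hence "fst q \<notin> A \<or> snd q \<notin> B" by (auto simp: mem_Times_iff)
    thus "F (fst q) * G (snd q) = 0" by (metis FA GB mult_zero_left mult_zero_right)
  qed
qed

lemma peval_supp:
  assumes "finite A" and "\<And>x. F x \<noteq> 0 \<Longrightarrow> x \<in> A"
  shows "peval F p = (\<Sum>m\<in>A. F m * mono_eval m p)"
  unfolding peval_def by (rule sum.mono_neutral_left) (use assms in auto)

lemma peval_mult:
  fixes F G :: "'a::comm_ring_1 tpoly"
  assumes A: "finite A" and B: "finite B" and FA: "\<And>x. F x \<noteq> 0 \<Longrightarrow> x \<in> A" and GB: "\<And>x. G x \<noteq> 0 \<Longrightarrow> x \<in> B"
  shows "peval (pmult F G) p = peval F p * peval G p"
proof -
  let ?t = "\<lambda>q. tadd (fst q) (snd q)"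
  let ?C = "?t ` (A \<times> B)"
  have C: "finite ?C" using A B by simp
  have PC: "pmult F G x \<noteq> 0 \<Longrightarrow> x \<in> ?C" for x
  proof (rule ccontr)
    assume "pmult F G x \<noteq> 0" "x \<notin> ?C"
    hence "{q\<in>A\<times>B. ?t q = x} = {}" by blast
    hence e: "{q\<in>A\<times>B. ?t q = x} = {}" .
    have "pmult F G x = (\<Sum>q\<in>{q\<in>A\<times>B. ?t q = x}. F (fst q) * G (snd q))"
      by (rule pmult_supp) (use A B FA GB in auto)
    hence "pmult F G x = 0" unfolding e by simp
    thus False using \<open>pmult F G x \<noteq> 0\<close> by simp
  qed
  have "peval (pmult F G) p = (\<Sum>m\<in>?C. pmult F G m * mono_eval m p)"
    by (rule peval_supp[OF C PC])
  also have "\<dots> = (\<Sum>m\<in>?C. \<Sum>q\<in>{q\<in>A\<times>B. ?t q = m}. F (fst q) * G (snd q) * mono_eval (?t q) p)"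
    by (rule sum.cong[OF refl]) (simp add: pmult_supp[of A B F G, OF A B FA GB] sum_distrib_right)
  also have "\<dots> = (\<Sum>q\<in>A\<times>B. F (fst q) * G (snd q) * mono_eval (?t q) p)"
    using sum.group[OF finite_cartesian_product[OF A B] C, of ?t "\<lambda>q. F (fst q) * G (snd q) * mono_eval (?t q) p"]
    by simp
  also have "\<dots> = (\<Sum>a\<in>A. \<Sum>b\<in>B. (F a * mono_eval a p) * (G b * mono_eval b p))"
    by (simp add: sum.cartesian_product mono_eval_tadd ac_simps) (rule sum.cong, auto)
  also have "\<dots> = (\<Sum>a\<in>A. F a * mono_eval a p) * (\<Sum>b\<in>B. G b * mono_eval b p)"
    by (simp add: sum_product)
  also have "\<dots> = peval F p * peval G p"
    using peval_supp[of A F p, OF A FA] peval_supp[of B G p, OF B GB] by simp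
  finally show ?thesis .
qed

lemma pmult_lin:
  "pmult F (\<lambda>g. c * G g + d * H g) m = c * pmult F G m + d * pmult F H m"
  unfolding pmult_pairs by (simp add: sum.distrib sum_distrib_left algebra_simps)



abbreviation "Emons \<equiv> {(0,2,1),(1,1,1),(0,1,2),(3,0,0),(2,0,1),(1,0,2),(0,0,3)} :: (nat\<times>nat\<times>nat) set"

lemma weier_supp: "weier a1 a2 a3 a4 a6 m \<noteq> 0 \<Longrightarrow> m \<in> Emons"
  by (auto simp: weier_def split: if_splits)

lemma weier_deg: "weier a1 a2 a3 a4 a6 m \<noteq> 0 \<Longrightarrow> tdeg m = 3"
  using weier_supp[of a1 a2 a3 a4 a6 m] by (auto simp: tdeg_def)

lemma weier_fst: "weier a1 a2 a3 a4 a6 m \<noteq> 0 \<Longrightarrow> m \<noteq> (3,0,0) \<Longrightarrow> fst m \<le> 2"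
  using weier_supp[of a1 a2 a3 a4 a6 m] by auto

lemma weier_300: "weier a1 a2 a3 a4 a6 (3,0,0) = -1"
  by (simp add: weier_def)

lemma pmult_weier_inj:
  fixes G :: "'a::comm_ring_1 tpoly"
  assumes fin: "finite {g. G g \<noteq> 0}" and z: "\<forall>m. pmult (weier a1 a2 a3 a4 a6) G m = 0"
  shows "\<forall>g. G g = 0"
proof (rule ccontr)
  let ?E = "weier a1 a2 a3 a4 a6"
  let ?Z = "{g. G g \<noteq> 0}"
  assume "\<not> (\<forall>g. G g = 0)"
  hence ne: "?Z \<noteq> {}" by auto
  define i0 where "i0 = Max (fst ` ?Z)"
  have "i0 \<in> fst ` ?Z" unfolding i0_def using fin ne by (intro Max_in) auto
  then obtain g0 where g0: "G g0 \<noteq> 0" "fst g0 = i0" by auto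
  have gmax: "G g \<noteq> 0 \<Longrightarrow> fst g \<le> i0" for g unfolding i0_def using fin by (intro Max_ge) auto
  define m where "m = tadd (3,0,0) g0"
  define p0 where "p0 = (((3,0,0)::nat\<times>nat\<times>nat), g0)"
  have p0: "p0 \<in> {p. tadd (fst p) (snd p) = m}" by (simp add: p0_def m_def)
  have others: "?E (fst p) * G (snd p) = 0" if p: "p \<in> {p. tadd (fst p) (snd p) = m} - {p0}" for p
  proof (cases "fst p = (3,0,0)")
    case True
    hence "tadd (3,0,0) (snd p) = tadd (3,0,0) g0" using p by (simp add: m_def)
    hence "snd p = g0" by (simp add: tadd_def prod_eq_iff)
    hence "p = p0" using True unfolding p0_def by (metis prod.collapse)
    thus ?thesis using p by simp
  next
    case False
    show ?thesis
    proof (cases "?E (fst p) = 0")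
      case False2: False
      hence "fst (fst p) \<le> 2" using weier_fst False by blast
      moreover have "fst (fst p) + fst (snd p) = 3 + i0" using p g0 by (simp add: m_def tadd_def)
      ultimately have "\<not> fst (snd p) \<le> i0" by simp
      hence "G (snd p) = 0" using gmax by blast
      thus ?thesis by simp
    qed simp
  qed
  have s0: "(\<Sum>p\<in>{p. tadd (fst p) (snd p) = m} - {p0}. ?E (fst p) * G (snd p)) = 0"
    by (rule sum.neutral) (use others in blast)
  have "pmult ?E G m = (\<Sum>p\<in>{p. tadd (fst p) (snd p) = m}. ?E (fst p) * G (snd p))" by (rule pmult_pairs)
  also have "\<dots> = ?E (fst p0) * G (snd p0) + (\<Sum>p\<in>{p. tadd (fst p) (snd p) = m} - {p0}. ?E (fst p) * G (snd p))"
    by (rule sum.remove[OF finite_pairs p0])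
  also have "\<dots> = - G g0" unfolding s0 by (simp add: p0_def weier_300)
  finally show False using z g0 by simp
qed

lemma pmult_weier_homog:
  assumes G: "\<forall>g. G g \<noteq> 0 \<longrightarrow> tdeg g + 3 = n" and m: "pmult (weier a1 a2 a3 a4 a6) G m \<noteq> 0"
  shows "tdeg m = n"
proof -
  obtain p where p: "p \<in> {p. tadd (fst p) (snd p) = m}" "weier a1 a2 a3 a4 a6 (fst p) * G (snd p) \<noteq> 0"
    using m unfolding pmult_pairs by (rule sum.not_neutral_contains_not_neutral) blast
  hence "weier a1 a2 a3 a4 a6 (fst p) \<noteq> 0" "G (snd p) \<noteq> 0" by auto
  hence "tdeg (fst p) = 3" "tdeg (snd p) + 3 = n" using weier_deg G by blast+
  thus ?thesis using p(1) tdeg_tadd[of "fst p" "snd p"] by simp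
qed

lemma div_reduce:
  fixes F :: "'a::comm_ring_1 tpoly"
  assumes hom: "homog n F" and F: "F = pmult (weier a1 a2 a3 a4 a6) G"
  shows "F = pmult (weier a1 a2 a3 a4 a6) (\<lambda>g. if tdeg g + 3 = n then G g else 0)"
proof
  let ?E = "weier a1 a2 a3 a4 a6"
  let ?G' = "\<lambda>g. if tdeg g + 3 = n then G g else 0"
  fix m
  show "F m = pmult ?E ?G' m"
  proof (cases "tdeg m = n")
    case True
    have "F m = (\<Sum>p\<in>{p. tadd (fst p) (snd p) = m}. ?E (fst p) * G (snd p))" unfolding F by (rule pmult_pairs)
    also have "\<dots> = (\<Sum>p\<in>{p. tadd (fst p) (snd p) = m}. ?E (fst p) * ?G' (snd p))"
    proof (rule sum.cong[OF refl])
      fix p assume p: "p \<in> {p. tadd (fst p) (snd p) = m}"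
      show "?E (fst p) * G (snd p) = ?E (fst p) * ?G' (snd p)"
      proof (cases "?E (fst p) = 0")
        case False
        hence "tdeg (fst p) = 3" by (rule weier_deg)
        hence "tdeg (snd p) + 3 = n" using p True tdeg_tadd[of "fst p" "snd p"] by simp
        thus ?thesis by simp
      qed simp
    qed
    also have "\<dots> = pmult ?E ?G' m" by (rule pmult_pairs[symmetric])
    finally show ?thesis .
  next
    case False
    have "F m \<noteq> 0 \<longrightarrow> m \<in> monomials n" using hom unfolding homog_def by (rule spec)
    hence "F m = 0" using False unfolding monomials_tdeg by blast
    moreover have "pmult ?E ?G' m = 0"
    proof (rule ccontr)
      assume "pmult ?E ?G' m \<noteq> 0"
      moreover have "\<forall>g. ?G' g \<noteq> 0 \<longrightarrow> tdeg g + 3 = n" by simp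
      ultimately have "tdeg m = n" by (rule pmult_weier_homog[rotated])
      thus False using False by simp
    qed
    ultimately show ?thesis by simp
  qed
qed



lemma finite_monomials: "finite (monomials d)"
proof -
  have "monomials d \<subseteq> {..d} \<times> {..d} \<times> {..d}" by (auto simp: monomials_def)
  thus ?thesis by (rule finite_subset) simp
qed

lemma card_monomials: "2 * card (monomials d) = (d+1)*(d+2)"
proof (induction d)
  case 0
  have "monomials 0 = {(0,0,0)}" by (auto simp: monomials_def)
  thus ?case by simp
next
  case (Suc d)
  let ?f = "\<lambda>m::nat\<times>nat\<times>nat. (fst m, fst (snd m), Suc (snd (snd m)))"
  let ?g = "\<lambda>i::nat. (i, Suc d - i, 0::nat)"
  have eq: "monomials (Suc d) = ?f ` monomials d \<union> ?g ` {..Suc d}"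
  proof
    show "monomials (Suc d) \<subseteq> ?f ` monomials d \<union> ?g ` {..Suc d}"
    proof
      fix m assume m: "m \<in> monomials (Suc d)"
      obtain i j k where ijk: "m = (i,j,k)" by (cases m)
      show "m \<in> ?f ` monomials d \<union> ?g ` {..Suc d}"
      proof (cases k)
        case 0
        hence "m = ?g i" "i \<in> {..Suc d}" using m ijk by (auto simp: monomials_def)
        thus ?thesis by blast
      next
        case (Suc k')
        hence "m = ?f (i,j,k')" "(i,j,k') \<in> monomials d" using m ijk by (auto simp: monomials_def)
        thus ?thesis by blast
      qed
    qed
    show "?f ` monomials d \<union> ?g ` {..Suc d} \<subseteq> monomials (Suc d)"
      by (auto simp: monomials_def)
  qed
  have disj: "?f ` monomials d \<inter> ?g ` {..Suc d} = {}" by auto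
  have c1: "card (?f ` monomials d) = card (monomials d)"
    by (rule card_image) (auto simp: inj_on_def prod_eq_iff)
  have c2: "card (?g ` {..Suc d}) = Suc (Suc d)"
    by (subst card_image) (auto simp: inj_on_def)
  have "card (monomials (Suc d)) = card (monomials d) + Suc (Suc d)"
    unfolding eq using disj c1 c2 finite_monomials[of d] by (simp add: card_Un_disjoint)
  thus ?case using Suc.IH by simp
qed

lemma card_low:
  assumes "n \<ge> 1"
  shows "card {g. tdeg g + 3 = n} + 3*n = card (monomials n)"
proof (cases "n \<ge> 3")
  case True
  then obtain k where k: "n = k + 3" by (metis add.commute le_Suc_ex)
  have "{g. tdeg g + 3 = n} = monomials k" using k by (auto simp: monomials_tdeg)
  moreover have "2 * card (monomials k) = (k+1)*(k+2)" by (rule card_monomials)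
  moreover have "2 * card (monomials n) = (n+1)*(n+2)" by (rule card_monomials)
  ultimately show ?thesis using k by (simp add: algebra_simps)
next
  case False
  hence "{g. tdeg g + 3 = n} = {}" by auto
  moreover have "2 * card (monomials n) = (n+1)*(n+2)" by (rule card_monomials)
  moreover have "n = 1 \<or> n = 2" using False assms by auto
  ultimately show ?thesis by auto
qed

lemma finite_low: "finite {g. tdeg g + 3 = n}"
  by (rule finite_subset[OF _ finite_monomials[of "n-3"]]) (auto simp: monomials_tdeg)



lemma kernel_count:
  fixes R :: "nat \<Rightarrow> 'a::{field,finite} \<times> 'a \<times> 'a"
  assumes S: "finite S"
  shows "card {F \<in> suppon (monomials n). \<forall>r\<in>S. peval F (R r) = 0} * CARD('a)^card S
       = card {v \<in> suppon S. \<forall>m\<in>monomials n. (\<Sum>r\<in>S. v r * mono_eval m (R r)) = 0} * CARD('a)^card (monomials n)"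
proof -
  let ?M = "monomials n"
  have e1: "{F \<in> suppon ?M. \<forall>r\<in>S. peval F (R r) = 0} = {c \<in> suppon ?M. \<forall>r\<in>S. (\<Sum>m\<in>?M. mono_eval m (R r) * c m) = 0}"
  proof -
    have "peval F (R r) = (\<Sum>m\<in>?M. mono_eval m (R r) * F m)" if "F \<in> suppon ?M" for F :: "'a tpoly" and r
      using peval_supp[of ?M F "R r", OF finite_monomials] that by (auto simp: suppon_def mult.commute)
    thus ?thesis by auto
  qed
  have e2: "{v \<in> suppon S. \<forall>m\<in>?M. (\<Sum>r\<in>S. v r * mono_eval m (R r)) = 0} = {v \<in> suppon S. \<forall>m\<in>?M. (\<Sum>r\<in>S. mono_eval m (R r) * v r) = 0}"
    by (simp add: mult.commute)
  show ?thesis unfolding e1 e2 using double_count[OF S finite_monomials, where a = "\<lambda>r m. mono_eval m (R r)"] by simp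
qed

lemma part3:
  fixes R :: "nat \<Rightarrow> 'a::{field,finite} \<times> 'a \<times> 'a"
  assumes S: "finite S" and cS: "card S = 3 * n" and n: "n \<ge> 1"
    and v: "v \<in> suppon S" and vnz: "r0 \<in> S" "v r0 \<noteq> 0"
    and vk: "\<forall>m\<in>monomials n. (\<Sum>r\<in>S. v r * mono_eval m (R r)) = 0"
  shows "\<exists>F. homog n F \<and> \<not> pdvd (weier a1 a2 a3 a4 a6) F \<and> (\<forall>r\<in>S. peval F (R r) = 0)"
proof -
  let ?E = "weier a1 a2 a3 a4 a6"
  let ?M = "monomials n"
  let ?L = "{g. tdeg g + 3 = n}"
  let ?q = "CARD('a)"
  let ?K1 = "{F \<in> suppon ?M. \<forall>r\<in>S. peval F (R r) = 0}"
  let ?K2 = "{v \<in> suppon S. \<forall>m\<in>?M. (\<Sum>r\<in>S. v r * mono_eval m (R r)) = 0}"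
  let ?D = "(\<lambda>G. pmult ?E G) ` (suppon ?L :: 'a tpoly set)"
  have kc: "card ?K1 * ?q^card S = card ?K2 * ?q^card ?M" by (rule kernel_count[OF S])
  have "{\<lambda>_. 0, v} \<subseteq> ?K2" using v vk by (auto simp: suppon_def)
  moreover have "v \<noteq> (\<lambda>_. 0)" using vnz by auto
  moreover have "finite ?K2" using finite_suppon[OF S, where 'a='a] by simp
  ultimately have "card {\<lambda>_. 0, v} \<le> card ?K2" by (intro card_mono)
  hence c2: "2 \<le> card ?K2" using \<open>v \<noteq> (\<lambda>_. 0)\<close> by simp
  have cM: "card ?M = card ?L + 3 * n" using card_low[OF n] by simp
  have qpos: "0 < ?q ^ card ?L" "0 < ?q ^ (3*n)" by simp_all
  have cD: "card ?D \<le> ?q ^ card ?L"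
    using card_image_le[OF finite_suppon[OF finite_low], of "\<lambda>G. pmult ?E G"] card_suppon[OF finite_low, where 'a='a]
    by simp
  have "card ?D * ?q^(3*n) < card ?K1 * ?q^(3*n)"
  proof -
    have "card ?D * ?q^(3*n) \<le> ?q ^ card ?L * ?q^(3*n)" using cD by simp
    also have "\<dots> < 2 * (?q ^ card ?L * ?q^(3*n))" using qpos by simp
    also have "\<dots> \<le> card ?K2 * (?q ^ card ?L * ?q^(3*n))" using c2 by (intro mult_right_mono) simp_all
    also have "\<dots> = card ?K1 * ?q^(3*n)" using kc cS cM by (simp add: power_add)
    finally show ?thesis .
  qed
  hence "card ?D < card ?K1" by simp
  moreover have finD: "finite ?D" using finite_suppon[OF finite_low, where 'a='a] by simp
  ultimately have "\<not> ?K1 \<subseteq> ?D" using card_mono[OF finD, of ?K1] by linarith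
  then obtain F where F: "F \<in> ?K1" "F \<notin> ?D" by blast
  have hom: "homog n F" using F(1) by (auto simp: homog_def suppon_def)
  have "\<not> pdvd ?E F"
  proof
    assume "pdvd ?E F"
    then obtain G where "F = pmult ?E G" unfolding pdvd_def by blast
    hence "F = pmult ?E (\<lambda>g. if tdeg g + 3 = n then G g else 0)" by (rule div_reduce[OF hom])
    moreover have "(\<lambda>g. if tdeg g + 3 = n then G g else 0) \<in> suppon ?L" by (auto simp: suppon_def)
    ultimately have "F \<in> ?D" by blast
    thus False using F(2) by simp
  qed
  thus ?thesis using hom F(1) by blast
qed

lemma part2:
  fixes R :: "nat \<Rightarrow> 'a::{field,finite} \<times> 'a \<times> 'a"
  assumes S: "finite S" and cS: "card S = 3 * n" and n: "n \<ge> 1"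
    and hom: "homog n F" and nd: "\<not> pdvd (weier a1 a2 a3 a4 a6) F"
    and FS: "\<forall>r\<in>S. peval F (R r) = 0" and ES: "\<forall>r\<in>S. peval (weier a1 a2 a3 a4 a6) (R r) = 0"
  shows "\<exists>v\<in>suppon S. (\<exists>r\<in>S. v r \<noteq> 0) \<and> (\<forall>m\<in>monomials n. (\<Sum>r\<in>S. v r * mono_eval m (R r)) = 0)"
proof -
  let ?E = "weier a1 a2 a3 a4 a6"
  let ?M = "monomials n"
  let ?L = "{g. tdeg g + 3 = n}"
  let ?q = "CARD('a)"
  let ?K1 = "{F \<in> suppon ?M. \<forall>r\<in>S. peval F (R r) = 0}"
  let ?K2 = "{v \<in> suppon S. \<forall>m\<in>?M. (\<Sum>r\<in>S. v r * mono_eval m (R r)) = 0}"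
  define \<Phi> where "\<Phi> = (\<lambda>(c::'a, G::'a tpoly). (\<lambda>m. c * F m + pmult ?E G m))"
  let ?G = "suppon ?L :: 'a tpoly set"
  have kc: "card ?K1 * ?q^card S = card ?K2 * ?q^card ?M" by (rule kernel_count[OF S])
  have cM: "card ?M = card ?L + 3 * n" using card_low[OF n] by simp
  have FM: "F m \<noteq> 0 \<Longrightarrow> m \<in> ?M" for m using hom unfolding homog_def by blast
  have GL: "\<forall>g. G g \<noteq> 0 \<longrightarrow> tdeg g + 3 = n" if "G \<in> ?G" for G using that by (auto simp: suppon_def)
  have EGM: "pmult ?E G m \<noteq> 0 \<Longrightarrow> m \<in> ?M" if "G \<in> ?G" for G m
    using pmult_weier_homog[OF GL[OF that]] by (auto simp: monomials_tdeg)
  have mem: "\<Phi> (c,G) \<in> ?K1" if G: "G \<in> ?G" for c G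
  proof -
    have "c * F x + pmult ?E G x = 0" if "x \<notin> ?M" for x
    proof -
      have "F x = 0" "pmult ?E G x = 0" using FM EGM[OF G] that by blast+
      thus ?thesis by simp
    qed
    hence "\<Phi> (c,G) \<in> suppon ?M" by (simp add: suppon_def \<Phi>_def)
    moreover have "peval (\<Phi> (c,G)) (R r) = 0" if r: "r \<in> S" for r
    proof -
      have Esupp: "?E x \<noteq> 0 \<Longrightarrow> x \<in> Emons" for x by (rule weier_supp)
      have GLs: "G x \<noteq> 0 \<Longrightarrow> x \<in> ?L" for x using GL[OF G] by blast
      have "peval (\<Phi> (c,G)) (R r) = (\<Sum>m\<in>?M. \<Phi> (c,G) m * mono_eval m (R r))"
        by (rule peval_supp[OF finite_monomials]) (use \<open>\<Phi> (c,G) \<in> suppon ?M\<close> in \<open>auto simp: suppon_def\<close>)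
      also have "\<dots> = (\<Sum>m\<in>?M. (c * F m + pmult ?E G m) * mono_eval m (R r))"
        by (simp add: \<Phi>_def)
      also have "\<dots> = c * (\<Sum>m\<in>?M. F m * mono_eval m (R r)) + (\<Sum>m\<in>?M. pmult ?E G m * mono_eval m (R r))"
        by (simp add: algebra_simps sum.distrib sum_distrib_left)
      also have "(\<Sum>m\<in>?M. F m * mono_eval m (R r)) = peval F (R r)"
        by (rule peval_supp[symmetric, OF finite_monomials]) (rule FM)
      also have "(\<Sum>m\<in>?M. pmult ?E G m * mono_eval m (R r)) = peval (pmult ?E G) (R r)"
        by (rule peval_supp[symmetric, OF finite_monomials]) (rule EGM[OF G])
      also have "peval (pmult ?E G) (R r) = peval ?E (R r) * peval G (R r)"
        by (rule peval_mult[of Emons ?L]) (use Esupp GLs finite_low in auto)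
      finally show ?thesis using FS ES r by simp
    qed
    ultimately show "\<Phi> (c,G) \<in> ?K1" by blast
  qed
  have sub: "\<Phi> ` (UNIV \<times> ?G) \<subseteq> ?K1" using mem by auto
  have inj: "inj_on \<Phi> (UNIV \<times> ?G)"
  proof (rule inj_onI, clarify)
    fix c G c' G' assume G: "G \<in> ?G" and G': "G' \<in> ?G" and e: "\<Phi> (c,G) = \<Phi> (c',G')"
    have em: "c * F m + pmult ?E G m = c' * F m + pmult ?E G' m" for m
      using fun_cong[OF e, of m] by (simp add: \<Phi>_def)
    show "c = c' \<and> G = G'"
    proof (cases "c = c'")
      case False
      define t where "t = 1 / (c - c')"
      define H where "H = (\<lambda>g. t * G' g + (- t) * G g)"
      have "F m = pmult ?E H m" for m
      proof -
        have "(c - c') * F m = pmult ?E G' m - pmult ?E G m" using em[of m] by (simp add: algebra_simps)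
        hence "F m = t * (pmult ?E G' m - pmult ?E G m)" using False unfolding t_def
          by (simp add: field_simps)
        thus ?thesis unfolding H_def pmult_lin by (simp add: algebra_simps)
      qed
      hence "F = pmult ?E H" by blast
      moreover have "poly_finite H"
      proof -
        have "{g. H g \<noteq> 0} \<subseteq> ?L"
        proof
          fix x assume "x \<in> {g. H g \<noteq> 0}"
          hence "G x \<noteq> 0 \<or> G' x \<noteq> 0" unfolding H_def by auto
          thus "x \<in> ?L" using GL[OF G, rule_format, of x] GL[OF G', rule_format, of x] by blast
        qed
        thus ?thesis unfolding poly_finite_def using finite_low finite_subset by blast
      qed
      ultimately have "pdvd ?E F" unfolding pdvd_def by blast
      thus ?thesis using nd by simp
    next
      case True
      define H where "H = (\<lambda>g. 1 * G g + (- 1) * G' g)"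
      have "\<forall>m. pmult ?E H m = 0" unfolding H_def pmult_lin using em True by simp
      moreover have "finite {g. H g \<noteq> 0}"
      proof -
        have "{g. H g \<noteq> 0} \<subseteq> ?L"
        proof
          fix x assume "x \<in> {g. H g \<noteq> 0}"
          hence "G x \<noteq> 0 \<or> G' x \<noteq> 0" unfolding H_def by auto
          thus "x \<in> ?L" using GL[OF G, rule_format, of x] GL[OF G', rule_format, of x] by blast
        qed
        thus ?thesis using finite_low finite_subset by blast
      qed
      ultimately have "\<forall>g. H g = 0" using pmult_weier_inj by blast
      hence "G = G'" unfolding H_def by auto
      thus ?thesis using True by simp
    qed
  qed
  have "card (\<Phi> ` (UNIV \<times> ?G)) \<le> card ?K1"
    using sub by (rule card_mono[rotated]) (use finite_suppon[OF finite_monomials, where 'a='a] in simp)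
  hence c1: "?q * ?q ^ card ?L \<le> card ?K1"
    using card_image[OF inj] card_suppon[OF finite_low, where 'a='a] by (simp add: card_cartesian_product)
  have "?q * ?q ^ card ?M \<le> card ?K2 * ?q ^ card ?M"
  proof -
    have "?q * ?q ^ card ?M = (?q * ?q ^ card ?L) * ?q^(3*n)" using cM by (simp add: power_add)
    also have "\<dots> \<le> card ?K1 * ?q^(3*n)" using c1 by simp
    also have "\<dots> = card ?K2 * ?q ^ card ?M" using kc cS by simp
    finally show ?thesis .
  qed
  hence "?q \<le> card ?K2" by simp
  hence c2: "2 \<le> card ?K2" using card_field_ge2[where 'a='a] by simp
  have "\<not> ?K2 \<subseteq> {\<lambda>_. 0}"
  proof
    assume "?K2 \<subseteq> {\<lambda>_. 0}"
    hence "card ?K2 \<le> card {(\<lambda>_. 0) :: nat \<Rightarrow> 'a}" by (rule card_mono[rotated]) simp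
    thus False using c2 by simp
  qed
  then obtain v where v: "v \<in> ?K2" "v \<noteq> (\<lambda>_. 0)" by blast
  then obtain r where "v r \<noteq> 0" by auto
  moreover have "r \<in> S" using v(1) \<open>v r \<noteq> 0\<close> by (auto simp: suppon_def)
  ultimately show ?thesis using v(1) by blast
qed


theorem mainTheorem4:
  fixes a1 a2 a3 a4 a6 :: "'a::{field,finite}"
    and n' l :: nat
    and R :: "nat \<Rightarrow> 'a \<times> 'a \<times> 'a"
  defines "N \<equiv> 3 * n' + l"
  assumes smooth: "weier_disc a1 a2 a3 a4 a6 \<noteq> 0"
    and n'_pos: "n' \<ge> 1" and l_pos: "l \<ge> 1"
    and pts: "\<forall>r<N. proj_point (R r) \<and> peval (weier a1 a2 a3 a4 a6) (R r) = 0"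
    and distinct: "\<forall>r<N. \<forall>s<N. r \<noteq> s \<longrightarrow> \<not> proj_eq (R r) (R s)"
  shows
    "((\<exists>F S. homog n' F \<and> \<not> pdvd (weier a1 a2 a3 a4 a6) F \<and>
             S \<subseteq> {..<N} \<and> card S = 3 * n' \<and> (\<forall>r\<in>S. peval F (R r) = 0))
      \<longrightarrow> (\<exists>v. in_left_kernel n' N R v \<and> (\<exists>r<N. v r \<noteq> 0) \<and>
               card {r. r < N \<and> v r = 0} \<ge> l))
     \<and> (\<forall>F S. homog n' F \<and> \<not> pdvd (weier a1 a2 a3 a4 a6) F \<and>
             S \<subseteq> {..<N} \<and> card S = 3 * n' \<and> (\<forall>r\<in>S. peval F (R r) = 0)
          \<longrightarrow> (\<exists>v. in_left_kernel n' N R v \<and> (\<exists>r<N. v r \<noteq> 0) \<and>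
                   (\<forall>r<N. r \<notin> S \<longrightarrow> v r = 0)))
     \<and> (\<forall>v. in_left_kernel n' N R v \<and> (\<exists>r<N. v r \<noteq> 0) \<and>
             card {r. r < N \<and> v r = 0} \<ge> l
          \<longrightarrow> (\<forall>S. S \<subseteq> {..<N} \<and> card S = 3 * n' \<and> {r. r < N \<and> v r \<noteq> 0} \<subseteq> S
               \<longrightarrow> (\<exists>F. homog n' F \<and> \<not> pdvd (weier a1 a2 a3 a4 a6) F \<and>
                        (\<forall>r\<in>S. peval F (R r) = 0))))"
  proof -
  let ?E = "weier a1 a2 a3 a4 a6"
  have P2: "\<exists>v. in_left_kernel n' N R v \<and> (\<exists>r<N. v r \<noteq> 0) \<and> (\<forall>r<N. r \<notin> S \<longrightarrow> v r = 0)"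
    if hF: "homog n' F" "\<not> pdvd ?E F" and hS: "S \<subseteq> {..<N}" "card S = 3 * n'" "\<forall>r\<in>S. peval F (R r) = 0"
    for F S
  proof -
    have finS: "finite S" using hS(1) finite_subset by blast
    have ES: "\<forall>r\<in>S. peval ?E (R r) = 0" using pts hS(1) by blast
    obtain v where v: "v \<in> suppon S" "\<exists>r\<in>S. v r \<noteq> 0"
      "\<forall>m\<in>monomials n'. (\<Sum>r\<in>S. v r * mono_eval m (R r)) = 0"
      using part2[OF finS hS(2) n'_pos hF hS(3) ES] by blast
    have vz: "r \<notin> S \<Longrightarrow> v r = 0" for r using v(1) by (auto simp: suppon_def)
    have "in_left_kernel n' N R v"
      unfolding in_left_kernel_def
    proof
      fix m assume m: "m \<in> monomials n'"
      have "(\<Sum>r<N. v r * mono_eval m (R r)) = (\<Sum>r\<in>S. v r * mono_eval m (R r))"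
        by (rule sum.mono_neutral_right) (use hS(1) vz in auto)
      thus "(\<Sum>r<N. v r * mono_eval m (R r)) = 0" using v(3) m by simp
    qed
    moreover have "\<exists>r<N. v r \<noteq> 0" using v(2) hS(1) by blast
    moreover have "\<forall>r<N. r \<notin> S \<longrightarrow> v r = 0" using vz by blast
    ultimately show ?thesis by blast
  qed
  have C1: "(\<exists>F S. homog n' F \<and> \<not> pdvd ?E F \<and>
             S \<subseteq> {..<N} \<and> card S = 3 * n' \<and> (\<forall>r\<in>S. peval F (R r) = 0))
      \<longrightarrow> (\<exists>v. in_left_kernel n' N R v \<and> (\<exists>r<N. v r \<noteq> 0) \<and>
               card {r. r < N \<and> v r = 0} \<ge> l)"
  proof
    assume "\<exists>F S. homog n' F \<and> \<not> pdvd ?E F \<and>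
             S \<subseteq> {..<N} \<and> card S = 3 * n' \<and> (\<forall>r\<in>S. peval F (R r) = 0)"
    then obtain F S where h: "homog n' F" "\<not> pdvd ?E F" "S \<subseteq> {..<N}" "card S = 3 * n'" "\<forall>r\<in>S. peval F (R r) = 0"
      by blast
    obtain v where v: "in_left_kernel n' N R v" "\<exists>r<N. v r \<noteq> 0" "\<forall>r<N. r \<notin> S \<longrightarrow> v r = 0"
      using P2[OF h] by blast
    have "{..<N} - S \<subseteq> {r. r < N \<and> v r = 0}" using v(3) by auto
    hence "card ({..<N} - S) \<le> card {r. r < N \<and> v r = 0}" by (intro card_mono) auto
    moreover have "card ({..<N} - S) = l"
      using card_Diff_subset[OF finite_subset[OF h(3)] h(3)] h(4) unfolding N_def by simp
    ultimately show "\<exists>v. in_left_kernel n' N R v \<and> (\<exists>r<N. v r \<noteq> 0) \<and> card {r. r < N \<and> v r = 0} \<ge> l"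
      using v by auto
  qed
  have C3: "\<forall>v. in_left_kernel n' N R v \<and> (\<exists>r<N. v r \<noteq> 0) \<and>
             card {r. r < N \<and> v r = 0} \<ge> l
          \<longrightarrow> (\<forall>S. S \<subseteq> {..<N} \<and> card S = 3 * n' \<and> {r. r < N \<and> v r \<noteq> 0} \<subseteq> S
               \<longrightarrow> (\<exists>F. homog n' F \<and> \<not> pdvd ?E F \<and>
                        (\<forall>r\<in>S. peval F (R r) = 0)))"
  proof (intro allI impI)
    fix v S assume hv: "in_left_kernel n' N R v \<and> (\<exists>r<N. v r \<noteq> 0) \<and> card {r. r < N \<and> v r = 0} \<ge> l"
      and hS: "S \<subseteq> {..<N} \<and> card S = 3 * n' \<and> {r. r < N \<and> v r \<noteq> 0} \<subseteq> S"
    have finS: "finite S" using hS finite_subset by blast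
    define v' where "v' = (\<lambda>r. if r \<in> S then v r else 0)"
    have v'S: "v' \<in> suppon S" by (simp add: suppon_def v'_def)
    obtain r0 where r0: "r0 < N" "v r0 \<noteq> 0" using hv by blast
    hence r0S: "r0 \<in> S" using hS by blast
    have v'r0: "v' r0 \<noteq> 0" using r0 r0S by (simp add: v'_def)
    have vk: "\<forall>m\<in>monomials n'. (\<Sum>r\<in>S. v' r * mono_eval m (R r)) = 0"
    proof
      fix m assume m: "m \<in> monomials n'"
      have "(\<Sum>r\<in>S. v' r * mono_eval m (R r)) = (\<Sum>r\<in>S. v r * mono_eval m (R r))"
        by (rule sum.cong) (simp_all add: v'_def)
      also have "\<dots> = (\<Sum>r<N. v r * mono_eval m (R r))"
        by (rule sum.mono_neutral_left) (use hS in auto)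
      also have "\<dots> = 0" using hv m unfolding in_left_kernel_def by blast
      finally show "(\<Sum>r\<in>S. v' r * mono_eval m (R r)) = 0" .
    qed
    show "\<exists>F. homog n' F \<and> \<not> pdvd ?E F \<and> (\<forall>r\<in>S. peval F (R r) = 0)"
      by (rule part3[OF finS _ n'_pos v'S r0S v'r0 vk]) (use hS in simp)
  qed
  show ?thesis using C1 P2 C3 by blast
qed

end
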